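(* Let $P,Q\in\Gamma_n$ and $0<r\le R$ with $r\le p_i/q_i\le R$ for all $i$. Let $s,t\in\mathbb{R}$. If $s\ge t$ and $t\le2$, then $$\frac{1}{4r^{t-2}}\Big(\frac{r+1}{2}\Big)^{s-2}\Phi_t(P\|Q)\le\Omega_s(Q\|P)\le\frac{1}{4R^{t-2}}\Big(\frac{R+1}{2}\Big)^{s-2}\Phi_t(P\|Q).$$ If $s\le t$ and $t\ge2$, then $$\frac{1}{4R^{t-2}}\Big(\frac{R+1}{2}\Big)^{s-2}\Phi_t(P\|Q)\le\Omega_s(Q\|P)\le\frac{1}{4r^{t-2}}\Big(\frac{r+1}{2}\Big)^{s-2}\Phi_t(P\|Q).$$
   Context: $\Gamma_n=\{P=(p_1,\dots,p_n): p_i>0,\ \sum_i p_i=1\}$, $n\ge2$. For $P,Q\in\Gamma_n$ and $s\in\mathbb{R}$: $\Phi_s(P\|Q)=[s(s-1)]^{-1}\big[\sum_i p_i^s q_i^{1-s}-1\big]$ for $s\ne0,1$; $\Phi_0(P\|Q)=\sum_i q_i\ln(q_i/p_i)$; $\Phi_1(P\|Q)=\sum_i p_i\ln(p_i/q_i)$. $\Omega_s(Q\|P)=[s(s-1)]^{-1}\big[\sum_i q_i\big(\frac{p_i+q_i}{2q_i}\big)^s-1\big]$ for $s\ne0,1$; $\Omega_0(Q\|P)=\sum_i q_i\ln\frac{2q_i}{p_i+q_i}$; $\Omega_1(Q\|P)=\sum_i\frac{p_i+q_i}{2}\ln\frac{p_i+q_i}{2q_i}$. *)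

theory Defs
  imports Complex_Main
begin

definition Gamma :: "nat \<Rightarrow> (nat \<Rightarrow> real) set" where
  "Gamma n = {p. (\<forall>i<n. p i > 0) \<and> (\<Sum>i<n. p i) = 1}"

definition Phi :: "nat \<Rightarrow> real \<Rightarrow> (nat \<Rightarrow> real) \<Rightarrow> (nat \<Rightarrow> real) \<Rightarrow> real" where
  "Phi n s p q =
     (if s = 0 then (\<Sum>i<n. q i * ln (q i / p i))
      else if s = 1 then (\<Sum>i<n. p i * ln (p i / q i))
      else ((\<Sum>i<n. p i powr s * q i powr (1 - s)) - 1) / (s * (s - 1)))"

text \<open>Omega_s(Q||P) (argument order: q first, then p).\<close>
definition Omega :: "nat \<Rightarrow> real \<Rightarrow> (nat \<Rightarrow> real) \<Rightarrow> (nat \<Rightarrow> real) \<Rightarrow> real" where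
  "Omega n s q p =
     (if s = 0 then (\<Sum>i<n. q i * ln (2 * q i / (p i + q i)))
      else if s = 1 then (\<Sum>i<n. (p i + q i) / 2 * ln ((p i + q i) / (2 * q i)))
      else ((\<Sum>i<n. q i * ((p i + q i) / (2 * q i)) powr s) - 1) / (s * (s - 1)))"

end

theory Submission
  imports Defs
begin

definition ff :: "real \<Rightarrow> real \<Rightarrow> real" where
  "ff t x = (if t = 0 then x - 1 - ln x else if t = 1 then x * ln x - x + 1
             else (x powr t - 1 - t * (x - 1)) / (t * (t - 1)))"

definition ff1 :: "real \<Rightarrow> real \<Rightarrow> real" where
  "ff1 t x = (if t = 0 then 1 - 1 / x else if t = 1 then ln x
             else (x powr (t - 1) - 1) / (t - 1))"

lemma ff_1: "ff t 1 = 0" "ff1 t 1 = 0" by (auto simp: ff_def ff1_def)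

lemma ff_deriv:
  assumes x: "0 < x"
  shows "(ff t has_real_derivative ff1 t x) (at x)"
proof -
  consider "t = 0" | "t = 1" | "t \<noteq> 0" "t \<noteq> 1" by blast
  then show ?thesis
  proof cases
    case 1
    have "((\<lambda>x. x - 1 - ln x) has_real_derivative 1 - 1 / x) (at x)"
      using x by (auto intro!: derivative_eq_intros simp: field_simps)
    then show ?thesis using 1 by (simp add: ff_def[abs_def] ff1_def)
  next
    case 2
    have "((\<lambda>x. x * ln x - x + 1) has_real_derivative ln x) (at x)"
      using x by (auto intro!: derivative_eq_intros simp: field_simps)
    then show ?thesis using 2 by (simp add: ff_def[abs_def] ff1_def)
  next
    case 3
    have "((\<lambda>x. (x powr t - 1 - t * (x - 1)) / (t * (t - 1))) has_real_derivative
          (t * x powr (t - 1) - t) / (t * (t - 1))) (at x)"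
      using x 3 by (auto intro!: derivative_eq_intros)
    moreover have "(t * x powr (t - 1) - t) / (t * (t - 1)) = (x powr (t - 1) - 1) / (t - 1)"
      using 3 by (simp add: field_simps)
    ultimately show ?thesis using 3 by (simp add: ff_def[abs_def] ff1_def)
  qed
qed

lemma ff1_deriv:
  assumes x: "0 < x"
  shows "(ff1 t has_real_derivative x powr (t - 2)) (at x)"
proof -
  consider "t = 0" | "t = 1" | "t \<noteq> 0" "t \<noteq> 1" by blast
  then show ?thesis
  proof cases
    case 1
    have "((\<lambda>x. 1 - 1 / x) has_real_derivative 1 / x^2) (at x)"
      using x by (auto intro!: derivative_eq_intros simp: field_simps power2_eq_square)
    moreover have "x powr (0 - 2) = 1 / x^2" using x by (simp add: powr_minus powr_realpow divide_inverse)
    ultimately show ?thesis using 1 by (simp add: ff1_def[abs_def])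
  next
    case 2
    have "((\<lambda>x. ln x) has_real_derivative 1 / x) (at x)"
      using x by (auto intro!: derivative_eq_intros simp: field_simps power2_eq_square)
    moreover have "x powr (1 - 2) = 1 / x" using x by (simp add: powr_minus divide_inverse)
    ultimately show ?thesis using 2 by (simp add: ff1_def[abs_def])
  next
    case 3
    have "((\<lambda>x. (x powr (t - 1) - 1) / (t - 1)) has_real_derivative
          ((t - 1) * x powr (t - 1 - 1)) / (t - 1)) (at x)"
      using x 3 by (auto intro!: derivative_eq_intros)
    moreover have "((t - 1) * x powr (t - 1 - 1)) / (t - 1) = x powr (t - 2)"
      using 3 by (simp add: field_simps)
    ultimately show ?thesis using 3 by (simp add: ff1_def[abs_def])
  qed
qed


lemma nonneg_from_convex:
  fixes F Fd Fdd :: "real \<Rightarrow> real"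
  assumes rR: "r \<le> 1" "1 \<le> R"
    and d1: "\<And>x. r \<le> x \<Longrightarrow> x \<le> R \<Longrightarrow> (F has_real_derivative Fd x) (at x)"
    and d2: "\<And>x. r \<le> x \<Longrightarrow> x \<le> R \<Longrightarrow> (Fd has_real_derivative Fdd x) (at x)"
    and pos: "\<And>x. r \<le> x \<Longrightarrow> x \<le> R \<Longrightarrow> Fdd x \<ge> 0"
    and F0: "F 1 = 0" and Fd0: "Fd 1 = 0" and x: "r \<le> x" "x \<le> R"
  shows "F x \<ge> 0"
proof (cases "x \<le> 1")
  case True
  have "F 1 \<le> F x"
  proof (rule DERIV_nonpos_imp_nonincreasing[OF True])
    fix y assume y: "x \<le> y" "y \<le> 1"
    have "Fd y \<le> Fd 1"
    proof (rule DERIV_nonneg_imp_nondecreasing[OF y(2)])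
      fix z assume z: "y \<le> z" "z \<le> 1"
      have "r \<le> z" "z \<le> R" using rR x y z by linarith+
      then show "\<exists>d. DERIV Fd z :> d \<and> d \<ge> 0" using d2 pos by blast
    qed
    then have "Fd y \<le> 0" using Fd0 by linarith
    moreover have "r \<le> y" "y \<le> R" using rR x y by linarith+
    ultimately show "\<exists>d. DERIV F y :> d \<and> d \<le> 0" using d1 by blast
  qed
  then show ?thesis using F0 by linarith
next
  case False
  then have x1: "1 \<le> x" by simp
  have "F 1 \<le> F x"
  proof (rule DERIV_nonneg_imp_nondecreasing[OF x1])
    fix y assume y: "1 \<le> y" "y \<le> x"
    have "Fd 1 \<le> Fd y"
    proof (rule DERIV_nonneg_imp_nondecreasing[OF y(1)])
      fix z assume z: "1 \<le> z" "z \<le> y"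
      have "r \<le> z" "z \<le> R" using rR x y z by linarith+
      then show "\<exists>d. DERIV Fd z :> d \<and> d \<ge> 0" using d2 pos by blast
    qed
    then have "Fd y \<ge> 0" using Fd0 by linarith
    moreover have "r \<le> y" "y \<le> R" using rR x y by linarith+
    ultimately show "\<exists>d. DERIV F y :> d \<and> d \<ge> 0" using d1 by blast
  qed
  then show ?thesis using F0 by linarith
qed

lemma Gamma_facts:
  assumes "p \<in> Gamma n"
  shows "\<And>i. i < n \<Longrightarrow> p i > 0" "(\<Sum>i<n. p i) = 1"
  using assms by (auto simp: Gamma_def)

lemma aux_lin:
  fixes q Y A L :: real
  assumes h: "q * Y = A"
  shows "A * L = q * (Y * L - Y + 1) + (A - q)"
    and "q * (- L) = q * (Y - 1 - L) - (A - q)"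
proof -
  have "q * (Y * L - Y + 1) = (q * Y) * L - q * Y + q" by algebra
  then show "A * L = q * (Y * L - Y + 1) + (A - q)" using h by simp
  have "q * (Y - 1 - L) = q * Y - q - q * L" by algebra
  then show "q * (- L) = q * (Y - 1 - L) - (A - q)" using h by simp
qed

lemma aux_pow:
  fixes q Y A Z D s :: real
  assumes h: "q * Y = A"
  shows "q * ((Z - 1 - s * (Y - 1)) / D) = ((q * Z - q) - s * (A - q)) / D"
proof -
  have "q * (Z - 1 - s * (Y - 1)) = q * Z - q - s * (q * Y - q)" by algebra
  then show ?thesis using h by (simp add: times_divide_eq_right)
qed

lemma Phi_eq:
  assumes p: "p \<in> Gamma n" and q: "q \<in> Gamma n"
  shows "Phi n t p q = (\<Sum>i<n. q i * ff t (p i / q i))"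
proof -
  note pp = Gamma_facts[OF p] and qq = Gamma_facts[OF q]
  have dsum: "(\<Sum>i<n. p i - q i) = 0" using pp qq by (simp add: sum_subtractf)
  have qY: "\<And>i. i < n \<Longrightarrow> q i * (p i / q i) = p i"
    using qq(1) by (metis less_irrefl nonzero_mult_div_cancel_left times_divide_eq_right)
  consider "t = 0" | "t = 1" | "t \<noteq> 0" "t \<noteq> 1" by blast
  then show ?thesis
  proof cases
    case 1
    have "\<And>i. i < n \<Longrightarrow> q i * ln (q i / p i) = q i * ff t (p i / q i) - (p i - q i)"
    proof -
      fix i assume i: "i < n"
      have "ln (q i / p i) = - ln (p i / q i)"
        using pp(1)[OF i] qq(1)[OF i] by (simp add: ln_div)
      then show "q i * ln (q i / p i) = q i * ff t (p i / q i) - (p i - q i)"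
        using 1 aux_lin(2)[OF qY[OF i]] by (simp add: ff_def)
    qed
    then have "(\<Sum>i<n. q i * ln (q i / p i)) = (\<Sum>i<n. q i * ff t (p i / q i) - (p i - q i))"
      by (intro sum.cong) auto
    then show ?thesis using 1 dsum by (simp add: Phi_def sum_subtractf)
  next
    case 2
    have "\<And>i. i < n \<Longrightarrow> p i * ln (p i / q i) = q i * ff t (p i / q i) + (p i - q i)"
      using 2 aux_lin(1)[OF qY] by (simp add: ff_def)
    then have "(\<Sum>i<n. p i * ln (p i / q i)) = (\<Sum>i<n. q i * ff t (p i / q i) + (p i - q i))"
      by (intro sum.cong) auto
    then show ?thesis using 2 dsum by (simp add: Phi_def sum.distrib)
  next
    case 3
    have "\<And>i. i < n \<Longrightarrow> q i * ff t (p i / q i) =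
        ((p i powr t * q i powr (1 - t) - q i) - t * (p i - q i)) / (t * (t - 1))"
    proof -
      fix i assume i: "i < n"
      have e1: "(p i / q i) powr t = p i powr t / q i powr t"
        using pp(1)[OF i] qq(1)[OF i] by (simp add: powr_divide)
      have e2: "q i powr (1 - t) = q i / q i powr t"
        using qq(1)[OF i] by (simp add: powr_diff)
      have "q i * (p i / q i) powr t = p i powr t * q i powr (1 - t)"
        unfolding e1 e2 by simp
      then show "q i * ff t (p i / q i) =
        ((p i powr t * q i powr (1 - t) - q i) - t * (p i - q i)) / (t * (t - 1))"
        using 3 aux_pow[OF qY[OF i], of "(p i / q i) powr t" t "t * (t - 1)"] by (simp add: ff_def)
    qed
    then have "(\<Sum>i<n. q i * ff t (p i / q i)) =
       (\<Sum>i<n. ((p i powr t * q i powr (1 - t) - q i) - t * (p i - q i)) / (t * (t - 1)))"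
      by (intro sum.cong) auto
    also have "\<dots> = ((\<Sum>i<n. p i powr t * q i powr (1 - t)) - (\<Sum>i<n. q i) - (\<Sum>i<n. t * (p i - q i))) / (t * (t - 1))"
      by (simp only: sum_divide_distrib[symmetric] sum_subtractf sum_distrib_left)
    moreover have "(\<Sum>i<n. t * (p i - q i)) = 0" using dsum by (simp add: sum_distrib_left[symmetric])
    ultimately show ?thesis using 3 qq by (simp add: Phi_def)
  qed
qed

lemma Omega_eq:
  assumes p: "p \<in> Gamma n" and q: "q \<in> Gamma n"
  shows "Omega n s q p = (\<Sum>i<n. q i * ff s ((p i / q i + 1) / 2))"
proof -
  note pp = Gamma_facts[OF p] and qq = Gamma_facts[OF q]
  have dsum: "(\<Sum>i<n. (p i + q i) / 2 - q i) = 0" using pp qq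
    by (simp add: sum_subtractf sum_divide_distrib[symmetric] sum.distrib)
  have y: "\<And>i. i < n \<Longrightarrow> (p i / q i + 1) / 2 = (p i + q i) / (2 * q i)"
  proof -
    fix i assume i: "i < n"
    note a = qq(1)[OF i]
    then show "(p i / q i + 1) / 2 = (p i + q i) / (2 * q i)" by (simp add: field_simps)
  qed
  have qY: "\<And>i. i < n \<Longrightarrow> q i * ((p i + q i) / (2 * q i)) = (p i + q i) / 2"
  proof -
    fix i assume i: "i < n"
    note a = qq(1)[OF i]
    then show "q i * ((p i + q i) / (2 * q i)) = (p i + q i) / 2" by (simp add: field_simps)
  qed
  consider "s = 0" | "s = 1" | "s \<noteq> 0" "s \<noteq> 1" by blast
  then show ?thesis
  proof cases
    case 1
    have ff0: "\<And>Y. ff s Y = Y - 1 - ln Y" using 1 by (simp add: ff_def)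
    have "\<And>i. i < n \<Longrightarrow> q i * ln (2 * q i / (p i + q i)) = q i * ff s ((p i / q i + 1) / 2) - ((p i + q i) / 2 - q i)"
    proof -
      fix i assume i: "i < n"
      have "ln (2 * q i / (p i + q i)) = - ln ((p i + q i) / (2 * q i))"
        using pp(1)[OF i] qq(1)[OF i] by (simp add: ln_div)
      then show "q i * ln (2 * q i / (p i + q i)) = q i * ff s ((p i / q i + 1) / 2) - ((p i + q i) / 2 - q i)"
        unfolding y[OF i] ff0 using aux_lin(2)[OF qY[OF i]] by simp
    qed
    then have "(\<Sum>i<n. q i * ln (2 * q i / (p i + q i))) = (\<Sum>i<n. q i * ff s ((p i / q i + 1) / 2) - ((p i + q i) / 2 - q i))"
      by (intro sum.cong) auto
    then show ?thesis using 1 dsum sum_subtractf[of "\<lambda>i. q i * ff s ((p i / q i + 1) / 2)" "\<lambda>i. (p i + q i) / 2 - q i" "{..<n}"]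
      by (simp only: Omega_def if_True simp_thms diff_zero)
  next
    case 2
    have "\<And>i. i < n \<Longrightarrow> (p i + q i) / 2 * ln ((p i + q i) / (2 * q i)) = q i * ff s ((p i / q i + 1) / 2) + ((p i + q i) / 2 - q i)"
    proof -
      fix i assume i: "i < n"
      have ff1': "\<And>Y. ff s Y = Y * ln Y - Y + 1" using 2 by (simp add: ff_def)
      show "(p i + q i) / 2 * ln ((p i + q i) / (2 * q i)) = q i * ff s ((p i / q i + 1) / 2) + ((p i + q i) / 2 - q i)"
        unfolding y[OF i] ff1' by (rule aux_lin(1)[OF qY[OF i]])
    qed
    then have "(\<Sum>i<n. (p i + q i) / 2 * ln ((p i + q i) / (2 * q i))) = (\<Sum>i<n. q i * ff s ((p i / q i + 1) / 2) + ((p i + q i) / 2 - q i))"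
      by (intro sum.cong) auto
    then show ?thesis using 2 dsum sum.distrib[of "\<lambda>i. q i * ff s ((p i / q i + 1) / 2)" "\<lambda>i. (p i + q i) / 2 - q i" "{..<n}"]
      by (simp only: Omega_def if_True if_False simp_thms one_neq_zero add_0_right)
  next
    case 3
    have "\<And>i. i < n \<Longrightarrow> q i * ff s ((p i / q i + 1) / 2) =
        ((q i * ((p i + q i) / (2 * q i)) powr s - q i) - s * ((p i + q i) / 2 - q i)) / (s * (s - 1))"
    proof -
      fix i assume i: "i < n"
      have ff3: "\<And>Y. ff s Y = (Y powr s - 1 - s * (Y - 1)) / (s * (s - 1))" using 3 by (simp add: ff_def)
      show "q i * ff s ((p i / q i + 1) / 2) =
        ((q i * ((p i + q i) / (2 * q i)) powr s - q i) - s * ((p i + q i) / 2 - q i)) / (s * (s - 1))"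
        unfolding y[OF i] ff3 by (rule aux_pow[OF qY[OF i]])
    qed
    then have "(\<Sum>i<n. q i * ff s ((p i / q i + 1) / 2)) =
       (\<Sum>i<n. ((q i * ((p i + q i) / (2 * q i)) powr s - q i) - s * ((p i + q i) / 2 - q i)) / (s * (s - 1)))"
      by (intro sum.cong) auto
    also have "\<dots> = ((\<Sum>i<n. q i * ((p i + q i) / (2 * q i)) powr s) - (\<Sum>i<n. q i) - (\<Sum>i<n. s * ((p i + q i) / 2 - q i))) / (s * (s - 1))"
      by (simp only: sum_divide_distrib[symmetric] sum_subtractf sum_distrib_left)
    also have "(\<Sum>i<n. s * ((p i + q i) / 2 - q i)) = 0" using dsum by (simp only: sum_distrib_left[symmetric] mult_zero_right)
    also have "(\<Sum>i<n. q i) = 1" by (rule qq(2))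
    finally show ?thesis using 3 by (simp only: Omega_def if_False diff_zero)
  qed
qed


lemma comp_derivs:
  assumes x: "0 < x"
  shows "((\<lambda>x. ff s ((x + 1) / 2)) has_real_derivative ff1 s ((x + 1) / 2) / 2) (at x)"
    and "((\<lambda>x. ff1 s ((x + 1) / 2) / 2) has_real_derivative ((x + 1) / 2) powr (s - 2) / 4) (at x)"
proof -
  have y: "0 < (x + 1) / 2" using x by simp
  have g: "((\<lambda>x. (x + 1) / 2) has_real_derivative 1 / 2) (at x)"
    by (auto intro!: derivative_eq_intros)
  have "((\<lambda>x. ff s ((x + 1) / 2)) has_real_derivative ff1 s ((x + 1) / 2) * (1 / 2)) (at x)"
    by (rule DERIV_chain2[OF ff_deriv[OF y] g])
  then show "((\<lambda>x. ff s ((x + 1) / 2)) has_real_derivative ff1 s ((x + 1) / 2) / 2) (at x)" by simp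
  have "((\<lambda>x. ff1 s ((x + 1) / 2)) has_real_derivative ((x + 1) / 2) powr (s - 2) * (1 / 2)) (at x)"
    by (rule DERIV_chain2[OF ff1_deriv[OF y] g])
  then have "((\<lambda>x. ff1 s ((x + 1) / 2) / 2) has_real_derivative ((x + 1) / 2) powr (s - 2) * (1 / 2) / 2) (at x)"
    by (rule DERIV_cdivide)
  then show "((\<lambda>x. ff1 s ((x + 1) / 2) / 2) has_real_derivative ((x + 1) / 2) powr (s - 2) / 4) (at x)" by simp
qed

lemma pointwise_lower:
  assumes r: "0 < r" "r \<le> 1" "1 \<le> R"
    and c: "\<And>y. r \<le> y \<Longrightarrow> y \<le> R \<Longrightarrow> c * y powr (t - 2) \<le> ((y + 1) / 2) powr (s - 2) / 4"
    and x: "r \<le> x" "x \<le> R"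
  shows "c * ff t x \<le> ff s ((x + 1) / 2)"
proof -
  have "0 \<le> (\<lambda>x. ff s ((x + 1) / 2) - c * ff t x) x"
  proof (rule nonneg_from_convex[where Fd = "\<lambda>x. ff1 s ((x + 1) / 2) / 2 - c * ff1 t x"
        and Fdd = "\<lambda>x. ((x + 1) / 2) powr (s - 2) / 4 - c * x powr (t - 2)", OF r(2,3) _ _ _ _ _ x])
    fix y assume y: "r \<le> y" "y \<le> R"
    then have y0: "0 < y" using r by linarith
    show "((\<lambda>x. ff s ((x + 1) / 2) - c * ff t x) has_real_derivative ff1 s ((y + 1) / 2) / 2 - c * ff1 t y) (at y)"
      by (intro DERIV_diff DERIV_cmult comp_derivs(1)[OF y0] ff_deriv[OF y0])
    show "((\<lambda>x. ff1 s ((x + 1) / 2) / 2 - c * ff1 t x) has_real_derivative ((y + 1) / 2) powr (s - 2) / 4 - c * y powr (t - 2)) (at y)"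
      by (intro DERIV_diff DERIV_cmult comp_derivs(2)[OF y0] ff1_deriv[OF y0])
    show "0 \<le> ((y + 1) / 2) powr (s - 2) / 4 - c * y powr (t - 2)" using c[OF y] by linarith
  qed (simp_all add: ff_1)
  then show ?thesis by simp
qed

lemma pointwise_upper:
  assumes r: "0 < r" "r \<le> 1" "1 \<le> R"
    and c: "\<And>y. r \<le> y \<Longrightarrow> y \<le> R \<Longrightarrow> ((y + 1) / 2) powr (s - 2) / 4 \<le> c * y powr (t - 2)"
    and x: "r \<le> x" "x \<le> R"
  shows "ff s ((x + 1) / 2) \<le> c * ff t x"
proof -
  have "0 \<le> (\<lambda>x. c * ff t x - ff s ((x + 1) / 2)) x"
  proof (rule nonneg_from_convex[where Fd = "\<lambda>x. c * ff1 t x - ff1 s ((x + 1) / 2) / 2"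
        and Fdd = "\<lambda>x. c * x powr (t - 2) - ((x + 1) / 2) powr (s - 2) / 4", OF r(2,3) _ _ _ _ _ x])
    fix y assume y: "r \<le> y" "y \<le> R"
    then have y0: "0 < y" using r by linarith
    show "((\<lambda>x. c * ff t x - ff s ((x + 1) / 2)) has_real_derivative c * ff1 t y - ff1 s ((y + 1) / 2) / 2) (at y)"
      by (intro DERIV_diff DERIV_cmult comp_derivs(1)[OF y0] ff_deriv[OF y0])
    show "((\<lambda>x. c * ff1 t x - ff1 s ((x + 1) / 2) / 2) has_real_derivative c * y powr (t - 2) - ((y + 1) / 2) powr (s - 2) / 4) (at y)"
      by (intro DERIV_diff DERIV_cmult comp_derivs(2)[OF y0] ff1_deriv[OF y0])
    show "0 \<le> c * y powr (t - 2) - ((y + 1) / 2) powr (s - 2) / 4" using c[OF y] by linarith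
  qed (simp_all add: ff_1)
  then show ?thesis by simp
qed

lemma sum_lower:
  assumes p: "p \<in> Gamma n" and q: "q \<in> Gamma n"
    and r: "0 < r" "r \<le> 1" "1 \<le> R"
    and b: "\<forall>i<n. r \<le> p i / q i \<and> p i / q i \<le> R"
    and c: "\<And>y. r \<le> y \<Longrightarrow> y \<le> R \<Longrightarrow> c * y powr (t - 2) \<le> ((y + 1) / 2) powr (s - 2) / 4"
  shows "c * Phi n t p q \<le> Omega n s q p"
proof -
  have "c * Phi n t p q = (\<Sum>i<n. q i * (c * ff t (p i / q i)))"
    unfolding Phi_eq[OF p q] sum_distrib_left by (simp add: algebra_simps)
  also have "\<dots> \<le> (\<Sum>i<n. q i * ff s ((p i / q i + 1) / 2))"
  proof (rule sum_mono)
    fix i assume "i \<in> {..<n}"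
    then have i: "i < n" by simp
    have "0 \<le> q i" using Gamma_facts(1)[OF q i] by simp
    then show "q i * (c * ff t (p i / q i)) \<le> q i * ff s ((p i / q i + 1) / 2)"
      using pointwise_lower[OF r c] b i by (intro mult_left_mono) auto
  qed
  also have "\<dots> = Omega n s q p" by (rule Omega_eq[OF p q, symmetric])
  finally show ?thesis .
qed

lemma sum_upper:
  assumes p: "p \<in> Gamma n" and q: "q \<in> Gamma n"
    and r: "0 < r" "r \<le> 1" "1 \<le> R"
    and b: "\<forall>i<n. r \<le> p i / q i \<and> p i / q i \<le> R"
    and c: "\<And>y. r \<le> y \<Longrightarrow> y \<le> R \<Longrightarrow> ((y + 1) / 2) powr (s - 2) / 4 \<le> c * y powr (t - 2)"
  shows "Omega n s q p \<le> c * Phi n t p q"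
proof -
  have "Omega n s q p = (\<Sum>i<n. q i * ff s ((p i / q i + 1) / 2))" by (rule Omega_eq[OF p q])
  also have "\<dots> \<le> (\<Sum>i<n. q i * (c * ff t (p i / q i)))"
  proof (rule sum_mono)
    fix i assume "i \<in> {..<n}"
    then have i: "i < n" by simp
    have "0 \<le> q i" using Gamma_facts(1)[OF q i] by simp
    then show "q i * ff s ((p i / q i + 1) / 2) \<le> q i * (c * ff t (p i / q i))"
      using pointwise_upper[OF r c] b i by (intro mult_left_mono) auto
  qed
  also have "\<dots> = c * Phi n t p q"
    unfolding Phi_eq[OF p q] sum_distrib_left by (simp add: algebra_simps)
  finally show ?thesis .
qed


definition Gf :: "real \<Rightarrow> real \<Rightarrow> real \<Rightarrow> real" where
  "Gf s t y = ((y + 1) / 2) powr (s - 2) * y powr (2 - t)"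

lemma Gf_alt:
  assumes y: "0 < y"
  shows "Gf s t y = ((y + 1) / 2) powr (s - t) * ((1 / y + 1) / 2) powr (t - 2)"
proof -
  have a: "0 < (y + 1) / 2" using y by simp
  have "(1 / y + 1) / 2 = ((y + 1) / 2) / y" using y by (simp add: field_simps)
  then have "((1 / y + 1) / 2) powr (t - 2) = ((y + 1) / 2) powr (t - 2) / y powr (t - 2)"
    using a y by (simp only: powr_divide[of "(y + 1) / 2" y] less_imp_le)
  moreover have "y powr (2 - t) = 1 / y powr (t - 2)"
    using y by (metis minus_diff_eq powr_minus_divide)
  moreover have "((y + 1) / 2) powr (s - 2) = ((y + 1) / 2) powr (s - t) * ((y + 1) / 2) powr (t - 2)"
    by (simp add: powr_add[symmetric])
  ultimately show ?thesis unfolding Gf_def by simp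
qed

lemma Gf_mono_inc:
  assumes "t \<le> s" "t \<le> 2" "0 < a" "a \<le> b"
  shows "Gf s t a \<le> Gf s t b"
proof -
  have 1: "((a + 1) / 2) powr (s - t) \<le> ((b + 1) / 2) powr (s - t)"
    using assms by (intro powr_mono2) auto
  have b: "0 < b" using assms by simp
  have "0 < 1 / b" using b by simp
  then have b1: "0 < (1 / b + 1) / 2" by (intro divide_pos_pos add_pos_pos) simp_all
  have 2: "((1 / a + 1) / 2) powr (t - 2) \<le> ((1 / b + 1) / 2) powr (t - 2)"
  proof (rule powr_mono2')
    show "(1 / b + 1) / 2 \<le> (1 / a + 1) / 2" using assms by (simp add: frac_le)
  qed (use assms b1 in auto)
  show ?thesis unfolding Gf_alt[OF assms(3)] Gf_alt[OF b]
    using assms by (auto intro!: mult_mono 1 2)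
qed

lemma Gf_mono_dec:
  assumes "s \<le> t" "2 \<le> t" "0 < a" "a \<le> b"
  shows "Gf s t b \<le> Gf s t a"
proof -
  have 1: "((b + 1) / 2) powr (s - t) \<le> ((a + 1) / 2) powr (s - t)"
    using assms by (intro powr_mono2') auto
  have b: "0 < b" using assms by simp
  have "0 < 1 / b" using b by simp
  then have b1: "0 < (1 / b + 1) / 2" by (intro divide_pos_pos add_pos_pos) simp_all
  have 2: "((1 / b + 1) / 2) powr (t - 2) \<le> ((1 / a + 1) / 2) powr (t - 2)"
  proof (rule powr_mono2)
    show "(1 / b + 1) / 2 \<le> (1 / a + 1) / 2" using assms by (simp add: frac_le)
  qed (use assms b1 in auto)
  show ?thesis unfolding Gf_alt[OF assms(3)] Gf_alt[OF b]
    using assms by (auto intro!: mult_mono 1 2)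
qed

lemma cond_conv:
  assumes a: "0 < a" and y: "0 < y"
  shows "(1 / (4 * a powr (t - 2)) * ((a + 1) / 2) powr (s - 2)) * y powr (t - 2) = Gf s t a * y powr (t - 2) / 4"
    and "((y + 1) / 2) powr (s - 2) / 4 = Gf s t y * y powr (t - 2) / 4"
proof -
  have "a powr (2 - t) = 1 / a powr (t - 2)"
    using a by (metis minus_diff_eq powr_minus_divide)
  then show "(1 / (4 * a powr (t - 2)) * ((a + 1) / 2) powr (s - 2)) * y powr (t - 2) = Gf s t a * y powr (t - 2) / 4"
    unfolding Gf_def by simp
  have "y powr (2 - t) * y powr (t - 2) = 1"
    using y by (simp add: powr_add[symmetric])
  then show "((y + 1) / 2) powr (s - 2) / 4 = Gf s t y * y powr (t - 2) / 4"
    unfolding Gf_def by (simp add: mult.assoc)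
qed

lemma cond_le:
  assumes a: "0 < a" and y: "0 < y" and G: "Gf s t a \<le> Gf s t y"
  shows "(1 / (4 * a powr (t - 2)) * ((a + 1) / 2) powr (s - 2)) * y powr (t - 2) \<le> ((y + 1) / 2) powr (s - 2) / 4"
proof -
  have "Gf s t a * y powr (t - 2) / 4 \<le> Gf s t y * y powr (t - 2) / 4"
    using G by (intro divide_right_mono mult_right_mono) auto
  then show ?thesis using cond_conv[OF a y] by metis
qed

lemma cond_ge:
  assumes a: "0 < a" and y: "0 < y" and G: "Gf s t y \<le> Gf s t a"
  shows "((y + 1) / 2) powr (s - 2) / 4 \<le> (1 / (4 * a powr (t - 2)) * ((a + 1) / 2) powr (s - 2)) * y powr (t - 2)"
proof -
  have "Gf s t y * y powr (t - 2) / 4 \<le> Gf s t a * y powr (t - 2) / 4"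
    using G by (intro divide_right_mono mult_right_mono) auto
  then show ?thesis using cond_conv[OF a y] by metis
qed

lemma one_between:
  assumes "n \<ge> 2" and p: "p \<in> Gamma n" and q: "q \<in> Gamma n"
    and b: "\<forall>i<n. r \<le> p i / q i \<and> p i / q i \<le> R"
  shows "r \<le> 1" "1 \<le> R"
proof -
  note pp = Gamma_facts[OF p] and qq = Gamma_facts[OF q]
  have "0 \<in> {..<n}" using assms(1) by simp
  then have ne: "{..<n} \<noteq> {}" by blast
  show "r \<le> 1"
  proof (rule ccontr)
    assume "\<not> r \<le> 1"
    then have "\<And>i. i \<in> {..<n} \<Longrightarrow> q i < p i"
    proof -
      fix i assume "\<not> r \<le> 1" "i \<in> {..<n}"
      then have i: "i < n" and "1 < p i / q i" using b by force+
      then show "q i < p i" using less_divide_eq_1_pos[OF qq(1)[OF i]] by blast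
    qed
    then have "(\<Sum>i<n. q i) < (\<Sum>i<n. p i)" by (intro sum_strict_mono ne) auto
    then show False using pp qq by simp
  qed
  show "1 \<le> R"
  proof (rule ccontr)
    assume "\<not> 1 \<le> R"
    then have "\<And>i. i \<in> {..<n} \<Longrightarrow> p i < q i"
    proof -
      fix i assume "\<not> 1 \<le> R" "i \<in> {..<n}"
      then have i: "i < n" and "p i / q i < 1" using b by force+
      then show "p i < q i" using divide_less_eq_1_pos[OF qq(1)[OF i]] by blast
    qed
    then have "(\<Sum>i<n. p i) < (\<Sum>i<n. q i)" by (intro sum_strict_mono ne) auto
    then show False using pp qq by simp
  qed
qed

theorem theorem4p1:
  fixes n :: nat and p q :: "nat \<Rightarrow> real" and r R s t :: real
  assumes "n \<ge> 2"
    and "p \<in> Gamma n" and "q \<in> Gamma n"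
    and "0 < r" and "r \<le> R"
    and "\<forall>i<n. r \<le> p i / q i \<and> p i / q i \<le> R"
  shows "(s \<ge> t \<and> t \<le> 2 \<longrightarrow>
            1 / (4 * r powr (t - 2)) * ((r + 1) / 2) powr (s - 2) * Phi n t p q \<le> Omega n s q p \<and>
            Omega n s q p \<le> 1 / (4 * R powr (t - 2)) * ((R + 1) / 2) powr (s - 2) * Phi n t p q)
       \<and> (s \<le> t \<and> t \<ge> 2 \<longrightarrow>
            1 / (4 * R powr (t - 2)) * ((R + 1) / 2) powr (s - 2) * Phi n t p q \<le> Omega n s q p \<and>
            Omega n s q p \<le> 1 / (4 * r powr (t - 2)) * ((r + 1) / 2) powr (s - 2) * Phi n t p q)"
proof -
  note ob = one_between[OF assms(1,2,3,6)]
  have rr: "0 < r" "r \<le> 1" "1 \<le> R" using assms(4) ob by auto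
  have R0: "0 < R" using assms(4,5) by linarith
  show ?thesis
  proof (intro conjI impI; elim conjE)
    assume st: "t \<le> s" "t \<le> 2"
    show "1 / (4 * r powr (t - 2)) * ((r + 1) / 2) powr (s - 2) * Phi n t p q \<le> Omega n s q p"
    proof (rule sum_lower[OF assms(2,3) rr assms(6)])
      fix y assume y: "r \<le> y" "y \<le> R"
      have y0: "0 < y" using y assms(4) by linarith
      show "1 / (4 * r powr (t - 2)) * ((r + 1) / 2) powr (s - 2) * y powr (t - 2) \<le> ((y + 1) / 2) powr (s - 2) / 4"
        by (rule cond_le[OF assms(4) y0 Gf_mono_inc[OF st assms(4) y(1)]])
    qed
    show "Omega n s q p \<le> 1 / (4 * R powr (t - 2)) * ((R + 1) / 2) powr (s - 2) * Phi n t p q"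
    proof (rule sum_upper[OF assms(2,3) rr assms(6)])
      fix y assume y: "r \<le> y" "y \<le> R"
      have y0: "0 < y" using y assms(4) by linarith
      show "((y + 1) / 2) powr (s - 2) / 4 \<le> 1 / (4 * R powr (t - 2)) * ((R + 1) / 2) powr (s - 2) * y powr (t - 2)"
        by (rule cond_ge[OF R0 y0 Gf_mono_inc[OF st y0 y(2)]])
    qed
  next
    assume st: "s \<le> t" "2 \<le> t"
    show "1 / (4 * R powr (t - 2)) * ((R + 1) / 2) powr (s - 2) * Phi n t p q \<le> Omega n s q p"
    proof (rule sum_lower[OF assms(2,3) rr assms(6)])
      fix y assume y: "r \<le> y" "y \<le> R"
      have y0: "0 < y" using y assms(4) by linarith
      show "1 / (4 * R powr (t - 2)) * ((R + 1) / 2) powr (s - 2) * y powr (t - 2) \<le> ((y + 1) / 2) powr (s - 2) / 4"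
        by (rule cond_le[OF R0 y0 Gf_mono_dec[OF st y0 y(2)]])
    qed
    show "Omega n s q p \<le> 1 / (4 * r powr (t - 2)) * ((r + 1) / 2) powr (s - 2) * Phi n t p q"
    proof (rule sum_upper[OF assms(2,3) rr assms(6)])
      fix y assume y: "r \<le> y" "y \<le> R"
      have y0: "0 < y" using y assms(4) by linarith
      show "((y + 1) / 2) powr (s - 2) / 4 \<le> 1 / (4 * r powr (t - 2)) * ((r + 1) / 2) powr (s - 2) * y powr (t - 2)"
        by (rule cond_ge[OF assms(4) y0 Gf_mono_dec[OF st assms(4) y(1)]])
    qed
  qed
qed

end
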